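(* For all multidistributions $\mu,\nu$ on configurations, real $w\ge0$, expectation $f$ and $c\in\{\mathit{true},\mathit{false}\}$: if $\mu\Rightarrow^w\nu$ (multi-step reduction with accumulated cost $w$), then \[ \mathbb{E}_\mu(e_c(f)) \;\ge\; [c]\cdot w + \mathbb{E}_\nu(e_c(f)). \]
   Context: Let $\mathrm{Var}$ be a finite set of integer-valued variables and $\Sigma = \mathrm{Var}\to\mathbb{Z}$ the set of stores; $\sigma[x\mapsto i]$ is the store updated at $x$. Boolean expressions $\varphi$ are evaluated on stores ($\sigma\models\varphi$). A distribution expression $d$ assigns to each store $\sigma$ a probability distribution $d(\sigma)$ on $\mathbb{Z}$. Commands: $C,D ::= \mathtt{skip} \mid \mathtt{tick}(r) \mid \mathtt{halt} \mid x :\approx d \mid \mathtt{if}_{[\psi]}(\varphi)\{C\}\{D\} \mid \mathtt{while}_{[\psi]}(\varphi)\{C\} \mid C \,\square\, D \mid C \oplus_p D \mid C;D$, with $r$ a nonnegative rational, $p\in[0,1]$. Expectations are functions $f:\Sigma\to[0,\infty]$, with pointwise operations, $\mathbf{r}$ the constant $r$, $[\varphi](\sigma)\in\{0,1\}$ the indicator, $[c]=1$ if $c=\mathit{true}$ and $0$ otherwise, $0\cdot\infty=0$. Transformer $\mathsf{et}_c$: $\mathsf{et}_c[\mathtt{skip}](f)=f$; $\mathsf{et}_c[\mathtt{tick}(r)](f)=[c]\cdot\mathbf{r}+f$; $\mathsf{et}_c[\mathtt{halt}](f)=\mathbf{0}$; $\mathsf{et}_c[x:\approx d](f)=\lambda\sigma.\sum_{i}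 d(\sigma)(i)\, f(\sigma[x\mapsto i])$; $\mathsf{et}_c[\mathtt{if}_{[\psi]}(\varphi)\{C\}\{D\}](f)=[\psi\wedge\varphi]\cdot\mathsf{et}_c[C](f)+[\psi\wedge\neg\varphi]\cdot\mathsf{et}_c[D](f)$; $\mathsf{et}_c[\mathtt{while}_{[\psi]}(\varphi)\{C\}](f)=\mathrm{lfp}\,F.\ [\psi\wedge\varphi]\cdot\mathsf{et}_c[C](F)+[\psi\wedge\neg\varphi]\cdot f$ (least fixed point, pointwise order); $\mathsf{et}_c[C\,\square\,D](f)=\max(\mathsf{et}_c[C](f),\mathsf{et}_c[D](f))$; $\mathsf{et}_c[C\oplus_p D](f)=\mathbf{p}\cdot\mathsf{et}_c[C](f)+\mathbf{(1-p)}\cdot\mathsf{et}_c[D](f)$; $\mathsf{et}_c[C;D](f)=\mathsf{et}_c[C](\mathsf{et}_c[D](f))$. Configurations: $\mathrm{Conf}=(\mathrm{Cmd}\times\Sigma)\cup\Sigma\cup\{\bot\}$; an active configuration is written $\langle C,\sigma\rangle$. A multidistribution on a set $A$ is a countable multiset $\mu$ of pairs $q:a$ with $a\in A$, $0<q\le1$, and $\sum_{q:a\in\mu}q\le1$; $\mathbb{E}_\mu(g)=\sum_{q:a\in\mu}q\cdot g(a)$ (with multiplicity). For $0<p\le1$, $p\cdot\{q_i:a_i\}_i=\{p q_i:a_i\}_i$, and for a countable family with $p_i>0$, $\sum_ip_i\le1$, $\biguplus_i p_i\cdot\mu_i$ is the multiset union of the $p_i\cdot\mu_i$. For $h:A\to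 B$, $\overline h(\{q_i:a_i\}_i)=\{q_i:h(a_i)\}_i$. A configuration $\gamma$ is identified with $\{1:\gamma\}$; entries with probability $0$ are omitted. The one-step relation $\gamma\to_w\mu$ is the least relation closed under: $\langle\mathtt{skip},\sigma\rangle\to_0\sigma$; $\langle\mathtt{tick}(r),\sigma\rangle\to_r\sigma$; $\langle\mathtt{halt},\sigma\rangle\to_0\bot$; $\langle x:\approx d,\sigma\rangle\to_0\{d(\sigma)(i):\sigma[x\mapsto i]\mid d(\sigma)(i)>0\}$; $\langle\mathtt{if}_{[\psi]}(\varphi)\{C\}\{D\},\sigma\rangle\to_0\langle C,\sigma\rangle$ if $\sigma\models\psi\wedge\varphi$, $\to_0\langle D,\sigma\rangle$ if $\sigma\models\psi\wedge\neg\varphi$, $\to_0\bot$ if $\sigma\models\neg\psi$; $\langle\mathtt{while}_{[\psi]}(\varphi)\{C\},\sigma\rangle\to_0\langle C;\mathtt{while}_{[\psi]}(\varphi)\{C\},\sigma\rangle$ if $\sigma\models\psi\wedge\varphi$, $\to_0\sigma$ if $\sigma\models\psi\wedge\neg\varphi$, $\to_0\bot$ if $\sigma\models\neg\psi$; $\langle C\,\square\,D,\sigma\rangle\to_0\langle C,\sigma\rangle$ and $\to_0\langle D,\sigma\rangle$; $\langle C\oplus_pD,\sigma\rangle\to_0\{p:\langle C,\sigma\rangle,1-p:\langle D,\sigma\rangle\}$; if $\langle C,\sigma\rangle\to_r\mu$ then $\langle C;D,\sigma\rangle\to_r\overline{\kappa_D}(\mu)$, where $\kappa_D(\langle C',\sigma'\rangle)=\langle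 C';D,\sigma'\rangle$, $\kappa_D(\sigma')=\langle D,\sigma'\rangle$, $\kappa_D(\bot)=\bot$. The lifted relation $\mu\Rightarrow_w\nu$ on multidistributions is the least relation with: $\mu\Rightarrow_0\mu$; $\{1:\gamma\}\Rightarrow_w\mu$ whenever $\gamma\to_w\mu$; and if $\mu_i\Rightarrow_{w_i}\nu_i$ for all $i$ in a countable index set $I$, $p_i>0$, $\sum_ip_i\le1$, then $\biguplus_ip_i\cdot\mu_i\Rightarrow_{w}\biguplus_ip_i\cdot\nu_i$ with $w=\sum_ip_iw_i$. The multi-step relation $\Rightarrow^w$ is the least relation with: $\mu\Rightarrow^0\mu$; $\mu\Rightarrow^w\nu$ whenever $\mu\Rightarrow_w\nu$; and $\mu\Rightarrow^{w_1+w_2}\nu$ whenever $\mu\Rightarrow^{w_1}\mu'$ and $\mu'\Rightarrow^{w_2}\nu$. For an expectation $f$, $e_c(f):\mathrm{Conf}\to[0,\infty]$ is defined by $e_c(f)(\langle C,\sigma\rangle)=\mathsf{et}_c[C](f)(\sigma)$, $e_c(f)(\sigma)=f(\sigma)$, $e_c(f)(\bot)=0$. *)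

theory Defs
  imports "HOL-Analysis.Analysis" "HOL-Probability.Probability_Mass_Function"
begin

type_synonym 'v store = "'v \<Rightarrow> int"
type_synonym 'v bexp = "'v store \<Rightarrow> bool"
type_synonym 'v dexp = "'v store \<Rightarrow> int pmf"
type_synonym 'v expect = "'v store \<Rightarrow> ennreal"

typedef nnrat = "{r :: rat. 0 \<le> r}" by auto
typedef unitreal = "{p :: real. 0 \<le> p \<and> p \<le> 1}" by auto

datatype 'v cmd =
    Skip
  | Tick nnrat
  | Halt
  | Assign 'v "'v dexp"
  | If "'v bexp" "'v bexp" "'v cmd" "'v cmd"
  | While "'v bexp" "'v bexp" "'v cmd"
  | NDet "'v cmd" "'v cmd"
  | PChoice "'v cmd" unitreal "'v cmd"
  | Seq "'v cmd" "'v cmd"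

definition tickcost :: "nnrat \<Rightarrow> real" where
  "tickcost r = real_of_rat (Rep_nnrat r)"

definition prb :: "unitreal \<Rightarrow> real" where
  "prb p = Rep_unitreal p"

primrec et :: "bool \<Rightarrow> 'v cmd \<Rightarrow> 'v expect \<Rightarrow> 'v expect" where
  "et c Skip f = f"
| "et c (Tick r) f = (\<lambda>\<sigma>. of_bool c * ennreal (tickcost r) + f \<sigma>)"
| "et c Halt f = (\<lambda>\<sigma>. 0)"
| "et c (Assign x d) f = (\<lambda>\<sigma>. \<Sum>\<^sub>\<infinity> i. ennreal (pmf (d \<sigma>) i) * f (\<sigma>(x := i)))"
| "et c (If \<psi> \<phi> C D) f = (\<lambda>\<sigma>. of_bool (\<psi> \<sigma> \<and> \<phi> \<sigma>) * et c C f \<sigma>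
                                 + of_bool (\<psi> \<sigma> \<and> \<not> \<phi> \<sigma>) * et c D f \<sigma>)"
| "et c (While \<psi> \<phi> C) f = lfp (\<lambda>F \<sigma>. of_bool (\<psi> \<sigma> \<and> \<phi> \<sigma>) * et c C F \<sigma>
                                 + of_bool (\<psi> \<sigma> \<and> \<not> \<phi> \<sigma>) * f \<sigma>)"
| "et c (NDet C D) f = (\<lambda>\<sigma>. max (et c C f \<sigma>) (et c D f \<sigma>))"
| "et c (PChoice C p D) f = (\<lambda>\<sigma>. ennreal (prb p) * et c C f \<sigma> + ennreal (1 - prb p) * et c D f \<sigma>)"
| "et c (Seq C D) f = et c C (et c D f)"

datatype 'v conf = Active "'v cmd" "'v store" | Term "'v store" | Bot

fun ec :: "bool \<Rightarrow> 'v expect \<Rightarrow> 'v conf \<Rightarrow> ennreal" where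
  "ec c f (Active C \<sigma>) = et c C f \<sigma>"
| "ec c f (Term \<sigma>) = f \<sigma>"
| "ec c f Bot = 0"

text \<open>A countable multiset of pairs q:a is represented by its multiplicity function
  (each pair has finite multiplicity since q > 0 and the total mass is at most 1).\<close>

type_synonym 'a mdist = "real \<times> 'a \<Rightarrow> nat"

definition is_mdist :: "'a mdist \<Rightarrow> bool" where
  "is_mdist \<mu> \<longleftrightarrow> (\<forall>x. 0 < \<mu> x \<longrightarrow> 0 < fst x \<and> fst x \<le> 1)
                 \<and> (\<Sum>\<^sub>\<infinity> x. of_nat (\<mu> x) * ennreal (fst x)) \<le> 1"

definition Emd :: "'a mdist \<Rightarrow> ('a \<Rightarrow> ennreal) \<Rightarrow> ennreal" where
  "Emd \<mu> g = (\<Sum>\<^sub>\<infinity> x. of_nat (\<mu> x) * ennreal (fst x) * g (snd x))"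

definition dirac :: "'a \<Rightarrow> 'a mdist" where
  "dirac a = (\<lambda>(q, b). if q = 1 \<and> b = a then 1 else 0)"

definition mfam :: "'i set \<Rightarrow> ('i \<Rightarrow> real) \<Rightarrow> ('i \<Rightarrow> 'a) \<Rightarrow> 'a mdist" where
  "mfam I q a = (\<lambda>(r, b). card {i \<in> I. q i = r \<and> a i = b})"

text \<open>p \<cdot> mu, for 0 < p.\<close>
definition scale :: "real \<Rightarrow> 'a mdist \<Rightarrow> 'a mdist" where
  "scale p \<mu> = (\<lambda>(q, a). \<mu> (q / p, a))"

definition munion :: "nat set \<Rightarrow> (nat \<Rightarrow> real) \<Rightarrow> (nat \<Rightarrow> 'a mdist) \<Rightarrow> 'a mdist" where
  "munion I p \<mu> = (\<lambda>x. \<Sum>\<^sub>\<infinity> i\<in>I. scale (p i) (\<mu> i) x)"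

definition mmap :: "('a \<Rightarrow> 'b) \<Rightarrow> 'a mdist \<Rightarrow> 'b mdist" where
  "mmap h \<mu> = (\<lambda>(q, b). \<Sum>\<^sub>\<infinity> a\<in>{a. h a = b}. \<mu> (q, a))"

fun kappa :: "'v cmd \<Rightarrow> 'v conf \<Rightarrow> 'v conf" where
  "kappa D (Active C' \<sigma>') = Active (Seq C' D) \<sigma>'"
| "kappa D (Term \<sigma>') = Active D \<sigma>'"
| "kappa D Bot = Bot"

inductive step :: "'v conf \<Rightarrow> real \<Rightarrow> 'v conf mdist \<Rightarrow> bool" where
  step_skip: "step (Active Skip \<sigma>) 0 (dirac (Term \<sigma>))"
| step_tick: "step (Active (Tick r) \<sigma>) (tickcost r) (dirac (Term \<sigma>))"
| step_halt: "step (Active Halt \<sigma>) 0 (dirac Bot)"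
| step_assign: "step (Active (Assign x d) \<sigma>) 0
     (mfam {i. 0 < pmf (d \<sigma>) i} (\<lambda>i. pmf (d \<sigma>) i) (\<lambda>i. Term (\<sigma>(x := i))))"
| step_if_t: "\<psi> \<sigma> \<and> \<phi> \<sigma> \<Longrightarrow> step (Active (If \<psi> \<phi> C D) \<sigma>) 0 (dirac (Active C \<sigma>))"
| step_if_f: "\<psi> \<sigma> \<and> \<not> \<phi> \<sigma> \<Longrightarrow> step (Active (If \<psi> \<phi> C D) \<sigma>) 0 (dirac (Active D \<sigma>))"
| step_if_a: "\<not> \<psi> \<sigma> \<Longrightarrow> step (Active (If \<psi> \<phi> C D) \<sigma>) 0 (dirac Bot)"
| step_while_t: "\<psi> \<sigma> \<and> \<phi> \<sigma> \<Longrightarrow>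
     step (Active (While \<psi> \<phi> C) \<sigma>) 0 (dirac (Active (Seq C (While \<psi> \<phi> C)) \<sigma>))"
| step_while_f: "\<psi> \<sigma> \<and> \<not> \<phi> \<sigma> \<Longrightarrow> step (Active (While \<psi> \<phi> C) \<sigma>) 0 (dirac (Term \<sigma>))"
| step_while_a: "\<not> \<psi> \<sigma> \<Longrightarrow> step (Active (While \<psi> \<phi> C) \<sigma>) 0 (dirac Bot)"
| step_ndet_l: "step (Active (NDet C D) \<sigma>) 0 (dirac (Active C \<sigma>))"
| step_ndet_r: "step (Active (NDet C D) \<sigma>) 0 (dirac (Active D \<sigma>))"
| step_pchoice: "step (Active (PChoice C p D) \<sigma>) 0
     (mfam {b. 0 < (if b then prb p else 1 - prb p)}
           (\<lambda>b. if b then prb p else 1 - prb p)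
           (\<lambda>b. Active (if b then C else D) \<sigma>))"
| step_seq: "step (Active C \<sigma>) r \<mu> \<Longrightarrow> step (Active (Seq C D) \<sigma>) r (mmap (kappa D) \<mu>)"

text \<open>Lifted one-step relation on multidistributions (countable index sets taken as subsets of nat).\<close>
inductive lstep :: "'v conf mdist \<Rightarrow> real \<Rightarrow> 'v conf mdist \<Rightarrow> bool" where
  lstep_refl: "is_mdist \<mu> \<Longrightarrow> lstep \<mu> 0 \<mu>"
| lstep_step: "step \<gamma> w \<mu> \<Longrightarrow> lstep (dirac \<gamma>) w \<mu>"
| lstep_union: "\<lbrakk> \<forall>i\<in>I. lstep (\<mu> i) (ws i) (\<nu> i); \<forall>i\<in>I. 0 < p i;
                  (\<Sum>\<^sub>\<infinity> i\<in>I. ennreal (p i)) \<le> 1; ((\<lambda>i. p i * ws i) has_sum w) I \<rbrakk>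
                \<Longrightarrow> lstep (munion I p \<mu>) w (munion I p \<nu>)"

inductive mstep :: "'v conf mdist \<Rightarrow> real \<Rightarrow> 'v conf mdist \<Rightarrow> bool" where
  mstep_refl: "is_mdist \<mu> \<Longrightarrow> mstep \<mu> 0 \<mu>"
| mstep_one: "lstep \<mu> w \<nu> \<Longrightarrow> mstep \<mu> w \<nu>"
| mstep_trans: "mstep \<mu> w1 \<mu>' \<Longrightarrow> mstep \<mu>' w2 \<nu> \<Longrightarrow> mstep \<mu> (w1 + w2) \<nu>"

end

theory Submission
  imports Defs
begin

lemma ennr_summable[simp]: "(f::'a \<Rightarrow> ennreal) summable_on S"
  by (rule nonneg_summable_on_complete) simp

lemma nat_has_sum_ennreal:
  fixes f :: "'a \<Rightarrow> nat"
  assumes "(f has_sum s) A"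
  shows "((\<lambda>x. of_nat (f x) :: ennreal) has_sum of_nat s) A"
  by (rule has_sum_homomorphism[OF assms]) auto

lemma nat_infsum_le:
  fixes f :: "'a \<Rightarrow> nat"
  shows "(of_nat (infsum f A) :: ennreal) \<le> (\<Sum>\<^sub>\<infinity>x\<in>A. of_nat (f x))"
proof (cases "f summable_on A")
  case True
  then have "((\<lambda>x. of_nat (f x) :: ennreal) has_sum of_nat (infsum f A)) A"
    by (intro nat_has_sum_ennreal has_sum_infsum)
  then show ?thesis by (simp add: infsumI)
next
  case False
  then show ?thesis by (simp add: infsum_not_exists)
qed

lemma nat_infsum_eq:
  fixes f :: "'a \<Rightarrow> nat"
  assumes "finite {x\<in>A. f x \<noteq> 0}"
  shows "(of_nat (infsum f A) :: ennreal) = (\<Sum>\<^sub>\<infinity>x\<in>A. of_nat (f x))"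
proof -
  have "(f has_sum (sum f {x\<in>A. f x \<noteq> 0})) A"
    by (rule has_sum_finite_neutralI[OF assms]) auto
  then have "f summable_on A" by (auto simp: summable_on_def)
  then have "((\<lambda>x. of_nat (f x) :: ennreal) has_sum of_nat (infsum f A)) A"
    by (intro nat_has_sum_ennreal has_sum_infsum)
  then show ?thesis by (simp add: infsumI)
qed

lemma ennreal_infsum_sum:
  fixes f :: "'a \<Rightarrow> 'b \<Rightarrow> ennreal"
  assumes "finite F"
  shows "(\<Sum>\<^sub>\<infinity>y\<in>B. \<Sum>x\<in>F. f x y) = (\<Sum>x\<in>F. \<Sum>\<^sub>\<infinity>y\<in>B. f x y)"
  using assms
proof (induction F rule: finite_induct)
  case empty then show ?case by simp
next
  case (insert a F)
  have "(\<Sum>\<^sub>\<infinity>y\<in>B. \<Sum>x\<in>insert a F. f x y) = (\<Sum>\<^sub>\<infinity>y\<in>B. f a y + (\<Sum>x\<in>F. f x y))"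
    using insert by simp
  also have "\<dots> = (\<Sum>\<^sub>\<infinity>y\<in>B. f a y) + (\<Sum>\<^sub>\<infinity>y\<in>B. \<Sum>x\<in>F. f x y)"
    by (rule infsum_add) auto
  finally show ?case using insert by simp
qed

lemma ennreal_finite_le:
  fixes f :: "'a \<Rightarrow> ennreal"
  assumes "finite F" "F \<subseteq> A"
  shows "sum f F \<le> infsum f A"
proof -
  have "infsum f F \<le> infsum f A"
    by (rule infsum_mono_neutral) (use assms in auto)
  then show ?thesis using assms by simp
qed

lemma ennreal_single_le:
  fixes f :: "'a \<Rightarrow> ennreal"
  assumes "a \<in> A"
  shows "f a \<le> infsum f A"
  using ennreal_finite_le[of "{a}" A f] assms by simp

lemma ennreal_swap_le:
  fixes f :: "'a \<Rightarrow> 'b \<Rightarrow> ennreal"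
  shows "(\<Sum>\<^sub>\<infinity>x\<in>A. \<Sum>\<^sub>\<infinity>y\<in>B. f x y) \<le> (\<Sum>\<^sub>\<infinity>y\<in>B. \<Sum>\<^sub>\<infinity>x\<in>A. f x y)"
proof (rule infsum_le_finite_sums)
  fix F assume F: "finite F" "F \<subseteq> A"
  have "(\<Sum>x\<in>F. \<Sum>\<^sub>\<infinity>y\<in>B. f x y) = (\<Sum>\<^sub>\<infinity>y\<in>B. \<Sum>x\<in>F. f x y)"
    by (rule ennreal_infsum_sum[OF F(1), symmetric])
  also have "\<dots> \<le> (\<Sum>\<^sub>\<infinity>y\<in>B. \<Sum>\<^sub>\<infinity>x\<in>A. f x y)"
    by (rule infsum_mono) (auto intro!: ennreal_finite_le F)
  finally show "(\<Sum>x\<in>F. \<Sum>\<^sub>\<infinity>y\<in>B. f x y) \<le> (\<Sum>\<^sub>\<infinity>y\<in>B. \<Sum>\<^sub>\<infinity>x\<in>A. f x y)" .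
qed simp

lemma ennreal_swap:
  fixes f :: "'a \<Rightarrow> 'b \<Rightarrow> ennreal"
  shows "(\<Sum>\<^sub>\<infinity>x\<in>A. \<Sum>\<^sub>\<infinity>y\<in>B. f x y) = (\<Sum>\<^sub>\<infinity>y\<in>B. \<Sum>\<^sub>\<infinity>x\<in>A. f x y)"
  by (rule antisym) (rule ennreal_swap_le)+

lemma ennreal_infsum_cmult_left:
  fixes f :: "'a \<Rightarrow> ennreal"
  shows "(\<Sum>\<^sub>\<infinity>x\<in>A. f x * c) = (\<Sum>\<^sub>\<infinity>x\<in>A. f x) * c"
proof (cases "c = top")
  case True
  show ?thesis
  proof (cases "\<forall>x\<in>A. f x = 0")
    case True
    then show ?thesis by (simp add: infsum_0)
  next
    case False
    then obtain a where a: "a \<in> A" "f a \<noteq> 0" by auto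
    have le1: "f a * c \<le> (\<Sum>\<^sub>\<infinity>x\<in>A. f x * c)"
      using ennreal_single_le[where f="\<lambda>x. f x * c"] a by simp
    have le2: "f a \<le> (\<Sum>\<^sub>\<infinity>x\<in>A. f x)"
      using ennreal_single_le[where f="f"] a by simp
    have "f a * c = top" using a True by (simp add: ennreal_mult_top)
    then have "(\<Sum>\<^sub>\<infinity>x\<in>A. f x * c) = top" using le1 by (simp add: top_unique)
    moreover have "(\<Sum>\<^sub>\<infinity>x\<in>A. f x) \<noteq> 0" using le2 a by auto
    ultimately show ?thesis using True
      by (simp add: ennreal_mult_top)
  qed
next
  case False
  have "(\<Sum>\<^sub>\<infinity>x\<in>A. f x * c) = infsum ((\<lambda>y. y * c) \<circ> f) A" by (simp add: o_def)
  also have "\<dots> = (\<Sum>\<^sub>\<infinity>x\<in>A. f x) * c"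
  proof (rule infsum_comm_additive_general)
    show "isCont (\<lambda>y. y * c) (infsum f A)"
      using ennreal_tendsto_cmult[of c "\<lambda>y. y" "infsum f A" "at (infsum f A)"] False
      by (simp add: isCont_def mult.commute top.not_eq_extremum)
  qed (auto simp: sum_distrib_right)
  finally show ?thesis .
qed

lemma ennreal_infsum_cmult_right:
  fixes f :: "'a \<Rightarrow> ennreal"
  shows "(\<Sum>\<^sub>\<infinity>x\<in>A. c * f x) = c * (\<Sum>\<^sub>\<infinity>x\<in>A. f x)"
  using ennreal_infsum_cmult_left[of f c A] by (simp add: mult.commute)

lemma ennreal_infsum_single:
  fixes K :: "'a \<Rightarrow> ennreal"
  shows "(\<Sum>\<^sub>\<infinity>x. if a = x then K x else 0) = K a"
proof -
  have "((\<lambda>x. if a = x then K x else 0) has_sum (\<Sum>x\<in>{a}. if a = x then K x else 0)) UNIV"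
    by (rule has_sum_finite_neutralI[where B="{a}"]) auto
  then show ?thesis by (simp add: infsumI)
qed

lemma fiber_sum:
  fixes m :: "'b \<Rightarrow> ennreal" and K :: "'a \<Rightarrow> ennreal"
  shows "(\<Sum>\<^sub>\<infinity>x. (\<Sum>\<^sub>\<infinity>y\<in>A. if k y = x then m y else 0) * K x) = (\<Sum>\<^sub>\<infinity>y\<in>A. m y * K (k y))"
proof -
  have "(\<Sum>\<^sub>\<infinity>x. (\<Sum>\<^sub>\<infinity>y\<in>A. if k y = x then m y else 0) * K x)
      = (\<Sum>\<^sub>\<infinity>x. \<Sum>\<^sub>\<infinity>y\<in>A. (if k y = x then m y * K x else 0))"
    by (rule infsum_cong, subst ennreal_infsum_cmult_left[symmetric], rule infsum_cong) simp
  also have "\<dots> = (\<Sum>\<^sub>\<infinity>y\<in>A. \<Sum>\<^sub>\<infinity>x. (if k y = x then m y * K x else 0))"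
    by (rule ennreal_swap)
  also have "\<dots> = (\<Sum>\<^sub>\<infinity>y\<in>A. m y * K (k y))"
    using ennreal_infsum_single[of "k _" "\<lambda>x. m _ * K x"] by simp
  finally show ?thesis .
qed


lemma ennreal_has_sum:
  fixes u :: "'a \<Rightarrow> real"
  assumes "(u has_sum w) I" "\<And>i. i \<in> I \<Longrightarrow> 0 \<le> u i"
  shows "(\<Sum>\<^sub>\<infinity>i\<in>I. ennreal (u i)) = ennreal w"
proof -
  have "((ennreal \<circ> u) has_sum ennreal w) I"
  proof (rule has_sum_comm_additive_general[OF _ _ assms(1)])
    fix F assume "finite F" "F \<subseteq> I"
    then show "sum (ennreal \<circ> u) F = ennreal (sum u F)" using assms(2) by (subst sum_ennreal[symmetric]) (auto simp: o_def)
  next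
    show "ennreal \<midarrow>w\<rightarrow> ennreal w"
      by (intro tendsto_ennrealI tendsto_ident_at)
  qed
  then show ?thesis by (simp add: infsumI o_def)
qed

lemma Emd_alt: "Emd \<mu> g = (\<Sum>\<^sub>\<infinity>x. of_nat (\<mu> x) * (ennreal (fst x) * g (snd x)))"
  unfolding Emd_def by (simp add: mult.assoc)

lemma Emd_dirac: "Emd (dirac a) g = g a"
proof -
  have "((\<lambda>x. of_nat (dirac a x) * ennreal (fst x) * g (snd x)) has_sum
        (\<Sum>x\<in>{(1,a)}. of_nat (dirac a x) * ennreal (fst x) * g (snd x))) UNIV"
    by (rule has_sum_finite_neutralI[where B="{(1,a)}"]) (auto simp: dirac_def split: prod.splits)
  then show ?thesis unfolding Emd_def by (simp add: infsumI dirac_def)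
qed

lemma card_le_infsum:
  "(of_nat (card {i\<in>I. P i}) :: ennreal) \<le> (\<Sum>\<^sub>\<infinity>i\<in>I. if P i then 1 else 0)"
proof (cases "finite {i\<in>I. P i}")
  case True
  have "(\<Sum>\<^sub>\<infinity>i\<in>I. if P i then 1 else 0) = (\<Sum>\<^sub>\<infinity>i\<in>{i\<in>I. P i}. (1::ennreal))"
    by (rule infsum_cong_neutral) auto
  also have "\<dots> = of_nat (card {i\<in>I. P i})" using True by simp
  finally show ?thesis by simp
qed simp

lemma Emd_mfam_le:
  "Emd (mfam I q a) g \<le> (\<Sum>\<^sub>\<infinity>i\<in>I. ennreal (q i) * g (a i))"
proof -
  define k where "k i = (q i, a i)" for i
  have "Emd (mfam I q a) g = (\<Sum>\<^sub>\<infinity>x. of_nat (card {i\<in>I. k i = x}) * (ennreal (fst x) * g (snd x)))"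
    unfolding Emd_alt mfam_def k_def by (rule infsum_cong) (auto split: prod.splits)
  also have "\<dots> \<le> (\<Sum>\<^sub>\<infinity>x. (\<Sum>\<^sub>\<infinity>i\<in>I. if k i = x then 1 else 0) * (ennreal (fst x) * g (snd x)))"
    by (rule infsum_mono) (auto intro!: mult_right_mono card_le_infsum)
  also have "\<dots> = (\<Sum>\<^sub>\<infinity>i\<in>I. 1 * (ennreal (fst (k i)) * g (snd (k i))))"
    by (rule fiber_sum)
  finally show ?thesis by (simp add: k_def)
qed

lemma Emd_mmap_le:
  fixes h :: "'a \<Rightarrow> 'b" and \<mu> :: "'a mdist"
  shows "Emd (mmap h \<mu>) g \<le> Emd \<mu> (\<lambda>a. g (h a))"
proof -
  define k :: "real \<times> 'a \<Rightarrow> real \<times> 'b" where "k y = (fst y, h (snd y))" for y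
  have fib: "(\<Sum>\<^sub>\<infinity>a\<in>{a. h a = snd x}. (of_nat (\<mu> (fst x, a)) :: ennreal))
       = (\<Sum>\<^sub>\<infinity>y. if k y = x then of_nat (\<mu> y) else 0)" for x
  proof -
    have "(\<Sum>\<^sub>\<infinity>y. if k y = x then (of_nat (\<mu> y) :: ennreal) else 0) = (\<Sum>\<^sub>\<infinity>y\<in>{y. k y = x}. of_nat (\<mu> y))"
      by (rule infsum_cong_neutral) auto
    also have "\<dots> = (\<Sum>\<^sub>\<infinity>a\<in>{a. h a = snd x}. of_nat (\<mu> (fst x, a)))"
    proof (rule infsum_reindex_bij_betw[symmetric])
      show "bij_betw (\<lambda>a. (fst x, a)) {a. h a = snd x} {y. k y = x}"
        by (rule bij_betwI[where g=snd]) (auto simp: k_def)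
    qed
    finally show ?thesis by simp
  qed
  have "Emd (mmap h \<mu>) g = (\<Sum>\<^sub>\<infinity>x. of_nat (infsum (\<lambda>a. \<mu> (fst x, a)) {a. h a = snd x}) * (ennreal (fst x) * g (snd x)))"
    unfolding Emd_alt mmap_def by (rule infsum_cong) (auto split: prod.splits)
  also have "\<dots> \<le> (\<Sum>\<^sub>\<infinity>x. (\<Sum>\<^sub>\<infinity>y. if k y = x then of_nat (\<mu> y) else 0) * (ennreal (fst x) * g (snd x)))"
    by (rule infsum_mono) (auto intro!: mult_right_mono simp: fib[symmetric] nat_infsum_le)
  also have "\<dots> = (\<Sum>\<^sub>\<infinity>y. of_nat (\<mu> y) * (ennreal (fst (k y)) * g (snd (k y))))"
    by (rule fiber_sum)
  finally show ?thesis by (simp add: k_def Emd_alt)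
qed

lemma Emd_scale:
  assumes "0 < p"
  shows "Emd (scale p \<mu>) g = ennreal p * Emd \<mu> g"
proof -
  define \<phi> where "\<phi> y = (p * fst y, snd y)" for y :: "real \<times> 'a"
  have bij: "bij_betw \<phi> UNIV UNIV"
    by (rule bij_betwI[where g="\<lambda>x. (fst x / p, snd x)"]) (use assms in \<open>auto simp: \<phi>_def\<close>)
  have "Emd (scale p \<mu>) g = (\<Sum>\<^sub>\<infinity>x. of_nat (\<mu> (fst x / p, snd x)) * ennreal (fst x) * g (snd x))"
    unfolding Emd_def scale_def by (rule infsum_cong) (auto split: prod.splits)
  also have "\<dots> = (\<Sum>\<^sub>\<infinity>y. of_nat (\<mu> (fst (\<phi> y) / p, snd (\<phi> y))) * ennreal (fst (\<phi> y)) * g (snd (\<phi> y)))"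
    by (rule infsum_reindex_bij_betw[OF bij, symmetric])
  also have "\<dots> = (\<Sum>\<^sub>\<infinity>y. ennreal p * (of_nat (\<mu> y) * ennreal (fst y) * g (snd y)))"
    using assms by (intro infsum_cong) (simp add: \<phi>_def ennreal_mult' mult_ac)
  also have "\<dots> = ennreal p * Emd \<mu> g"
    unfolding Emd_def by (rule ennreal_infsum_cmult_right)
  finally show ?thesis .
qed


lemma Emd_munion_aux:
  "Emd (munion I p \<nu>) g = (\<Sum>\<^sub>\<infinity>x. of_nat (\<Sum>\<^sub>\<infinity>i\<in>I. scale (p i) (\<nu> i) x) * (ennreal (fst x) * g (snd x)))"
  unfolding Emd_alt munion_def by simp

lemma Emd_munion_swap:
  assumes "\<forall>i\<in>I. 0 < p i"
  shows "(\<Sum>\<^sub>\<infinity>x. (\<Sum>\<^sub>\<infinity>i\<in>I. of_nat (scale (p i) (\<nu> i) x)) * (ennreal (fst x) * g (snd x)))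
         = (\<Sum>\<^sub>\<infinity>i\<in>I. ennreal (p i) * Emd (\<nu> i) g)"
proof -
  have "(\<Sum>\<^sub>\<infinity>x. (\<Sum>\<^sub>\<infinity>i\<in>I. of_nat (scale (p i) (\<nu> i) x)) * (ennreal (fst x) * g (snd x)))
     = (\<Sum>\<^sub>\<infinity>x. \<Sum>\<^sub>\<infinity>i\<in>I. of_nat (scale (p i) (\<nu> i) x) * (ennreal (fst x) * g (snd x)))"
    by (simp add: ennreal_infsum_cmult_left)
  also have "\<dots> = (\<Sum>\<^sub>\<infinity>i\<in>I. \<Sum>\<^sub>\<infinity>x. of_nat (scale (p i) (\<nu> i) x) * (ennreal (fst x) * g (snd x)))"
    by (rule ennreal_swap)
  also have "\<dots> = (\<Sum>\<^sub>\<infinity>i\<in>I. Emd (scale (p i) (\<nu> i)) g)"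
    by (simp add: Emd_alt)
  also have "\<dots> = (\<Sum>\<^sub>\<infinity>i\<in>I. ennreal (p i) * Emd (\<nu> i) g)"
    using assms by (intro infsum_cong) (simp add: Emd_scale)
  finally show ?thesis .
qed

lemma Emd_munion_le:
  assumes "\<forall>i\<in>I. 0 < p i"
  shows "Emd (munion I p \<nu>) g \<le> (\<Sum>\<^sub>\<infinity>i\<in>I. ennreal (p i) * Emd (\<nu> i) g)"
proof -
  have "Emd (munion I p \<nu>) g \<le> (\<Sum>\<^sub>\<infinity>x. (\<Sum>\<^sub>\<infinity>i\<in>I. of_nat (scale (p i) (\<nu> i) x)) * (ennreal (fst x) * g (snd x)))"
    unfolding Emd_munion_aux by (rule infsum_mono) (auto intro!: mult_right_mono nat_infsum_le)
  also have "\<dots> = (\<Sum>\<^sub>\<infinity>i\<in>I. ennreal (p i) * Emd (\<nu> i) g)" by (rule Emd_munion_swap[OF assms])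
  finally show ?thesis .
qed

lemma Emd_munion_eq:
  assumes "\<forall>i\<in>I. 0 < p i" "\<And>x. finite {i\<in>I. scale (p i) (\<mu> i) x \<noteq> 0}"
  shows "Emd (munion I p \<mu>) g = (\<Sum>\<^sub>\<infinity>i\<in>I. ennreal (p i) * Emd (\<mu> i) g)"
proof -
  have "Emd (munion I p \<mu>) g = (\<Sum>\<^sub>\<infinity>x. (\<Sum>\<^sub>\<infinity>i\<in>I. of_nat (scale (p i) (\<mu> i) x)) * (ennreal (fst x) * g (snd x)))"
    unfolding Emd_munion_aux by (rule infsum_cong) (simp add: nat_infsum_eq[OF assms(2)])
  then show ?thesis using Emd_munion_swap[OF assms(1)] by simp
qed

definition good :: "'a mdist \<Rightarrow> bool" where
  "good \<mu> \<longleftrightarrow> (\<forall>x. 0 < \<mu> x \<longrightarrow> 0 < fst x \<and> fst x \<le> 1)"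

lemma scale_pos:
  assumes "good \<mu>" "0 < p" "scale p \<mu> x \<noteq> 0"
  shows "0 < fst x \<and> fst x \<le> p"
proof -
  obtain q a where x: "x = (q, a)" by (cases x)
  have "0 < \<mu> (q / p, a)" using assms(3) by (simp add: scale_def x)
  then have "0 < q / p \<and> q / p \<le> 1" using assms(1) unfolding good_def by fastforce
  then show ?thesis using assms(2) by (simp add: x zero_less_divide_iff divide_le_eq)
qed

lemma munion_fin:
  assumes "\<forall>i\<in>I. good (\<mu> i)" "\<forall>i\<in>I. 0 < p i" "(\<Sum>\<^sub>\<infinity>i\<in>I. ennreal (p i)) \<le> 1"
  shows "finite {i\<in>I. scale (p i) (\<mu> i) x \<noteq> 0}"
proof (rule ccontr)
  define S where "S = {i\<in>I. scale (p i) (\<mu> i) x \<noteq> 0}"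
  assume inf: "infinite S"
  then obtain j where "j \<in> S" by (metis ex_in_conv finite.emptyI)
  then have fx: "0 < fst x" using scale_pos assms unfolding S_def by blast
  have ge: "ennreal (fst x) \<le> ennreal (p i)" if "i \<in> S" for i
    using scale_pos[of "\<mu> i" "p i" x] that assms unfolding S_def by (auto intro: ennreal_leI)
  have "(\<Sum>\<^sub>\<infinity>i\<in>S. ennreal (p i)) = \<infinity>"
    by (rule infsum_superconst_infinite_ennreal[OF ge _ inf]) (use fx in simp_all)
  moreover have "(\<Sum>\<^sub>\<infinity>i\<in>S. ennreal (p i)) \<le> (\<Sum>\<^sub>\<infinity>i\<in>I. ennreal (p i))"
    by (rule infsum_mono_neutral) (auto simp: S_def)
  ultimately show False using assms(3) by (simp add: top_unique)
qed

lemma good_munion: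
  assumes "\<forall>i\<in>I. good (\<mu> i)" "\<forall>i\<in>I. 0 < p i" "(\<Sum>\<^sub>\<infinity>i\<in>I. ennreal (p i)) \<le> 1"
  shows "good (munion I p \<mu>)"
  unfolding good_def
proof (intro allI impI)
  fix x assume pos: "0 < munion I p \<mu> x"
  have "\<exists>i\<in>I. scale (p i) (\<mu> i) x \<noteq> 0"
  proof (rule ccontr)
    assume "\<not> ?thesis"
    then have "munion I p \<mu> x = (\<Sum>\<^sub>\<infinity>i\<in>I. 0)" unfolding munion_def by (intro infsum_cong) auto
    then show False using pos by simp
  qed
  then obtain i where i: "i \<in> I" "scale (p i) (\<mu> i) x \<noteq> 0" by blast
  have "ennreal (p i) \<le> 1"
    using ennreal_single_le[of i I "\<lambda>i. ennreal (p i)"] i(1) assms(3) order_trans by blast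
  then have "p i \<le> 1" by (simp add: ennreal_le_1)
  then show "0 < fst x \<and> fst x \<le> 1" using scale_pos[of "\<mu> i" "p i" x] i assms by force
qed


lemma et_mono: "f \<le> g \<Longrightarrow> et c C f \<le> et c C g"
proof (induction C arbitrary: f g)
  case (Tick r)
  then show ?case by (auto simp: le_fun_def intro: add_left_mono)
next
  case (Assign x d)
  then show ?case
    by (auto simp: le_fun_def intro!: infsum_mono mult_left_mono)
next
  case (If \<psi> \<phi> C D)
  then show ?case
    by (auto simp: le_fun_def intro!: add_mono mult_left_mono)
next
  case (While \<psi> \<phi> C)
  show ?case
    unfolding et.simps
  proof (rule lfp_mono)
    fix F :: "'a expect"
    show "(\<lambda>\<sigma>. of_bool (\<psi> \<sigma> \<and> \<phi> \<sigma>) * et c C F \<sigma> + of_bool (\<psi> \<sigma> \<and> \<not> \<phi> \<sigma>) * f \<sigma>)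
        \<le> (\<lambda>\<sigma>. of_bool (\<psi> \<sigma> \<and> \<phi> \<sigma>) * et c C F \<sigma> + of_bool (\<psi> \<sigma> \<and> \<not> \<phi> \<sigma>) * g \<sigma>)"
      using While.prems by (auto simp: le_fun_def intro!: add_mono mult_left_mono)
  qed
next
  case (NDet C D)
  have "et c C f \<le> et c C g" "et c D f \<le> et c D g" using NDet by auto
  then show ?case
    unfolding le_fun_def et.simps by (intro allI max.mono) auto
next
  case (PChoice C p D)
  then show ?case
    by (auto simp: le_fun_def intro!: add_mono mult_left_mono)
next
  case (Seq C D)
  then show ?case by simp
qed simp_all

lemma et_while_unfold:
  "et c (While \<psi> \<phi> C) f \<sigma> = of_bool (\<psi> \<sigma> \<and> \<phi> \<sigma>) * et c C (et c (While \<psi> \<phi> C) f) \<sigma>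
      + of_bool (\<psi> \<sigma> \<and> \<not> \<phi> \<sigma>) * f \<sigma>"
proof -
  let ?\<Phi> = "\<lambda>F \<sigma>. of_bool (\<psi> \<sigma> \<and> \<phi> \<sigma>) * et c C F \<sigma> + of_bool (\<psi> \<sigma> \<and> \<not> \<phi> \<sigma>) * f \<sigma>"
  have "mono ?\<Phi>"
    by (rule monoI) (auto simp: le_fun_def intro!: add_mono mult_left_mono et_mono[unfolded le_fun_def, rule_format])
  then have "lfp ?\<Phi> = ?\<Phi> (lfp ?\<Phi>)" by (rule lfp_unfold)
  then show ?thesis by (simp add: fun_eq_iff)
qed


lemma step_nonneg: "step \<gamma> r \<mu> \<Longrightarrow> 0 \<le> r"
proof (induction rule: step.induct)
  case (step_tick r \<sigma>)
  then show ?case using Rep_nnrat[of r] by (simp add: tickcost_def)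
qed simp_all

lemma ec_kappa: "(\<lambda>a. ec c f (kappa D a)) = ec c (et c D f)"
proof
  fix a show "ec c f (kappa D a) = ec c (et c D f) a" by (cases a) simp_all
qed

lemma step_sound: "step \<gamma> r \<mu> \<Longrightarrow> of_bool c * ennreal r + Emd \<mu> (ec c f) \<le> ec c f \<gamma>"
proof (induction arbitrary: f rule: step.induct)
  case (step_assign x d \<sigma>)
  have "Emd (mfam {i. 0 < pmf (d \<sigma>) i} (\<lambda>i. pmf (d \<sigma>) i) (\<lambda>i. Term (\<sigma>(x := i)))) (ec c f)
     \<le> (\<Sum>\<^sub>\<infinity>i\<in>{i. 0 < pmf (d \<sigma>) i}. ennreal (pmf (d \<sigma>) i) * ec c f (Term (\<sigma>(x := i))))"
    by (rule Emd_mfam_le)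
  also have "\<dots> \<le> (\<Sum>\<^sub>\<infinity>i. ennreal (pmf (d \<sigma>) i) * f (\<sigma>(x := i)))"
    by (rule infsum_mono_neutral) auto
  finally show ?case by simp
next
  case (step_pchoice C p D \<sigma>)
  have "Emd (mfam {b. 0 < (if b then prb p else 1 - prb p)} (\<lambda>b. if b then prb p else 1 - prb p)
           (\<lambda>b. Active (if b then C else D) \<sigma>)) (ec c f)
     \<le> (\<Sum>\<^sub>\<infinity>b\<in>{b. 0 < (if b then prb p else 1 - prb p)}. ennreal (if b then prb p else 1 - prb p) * ec c f (Active (if b then C else D) \<sigma>))"
    by (rule Emd_mfam_le)
  also have "\<dots> \<le> (\<Sum>\<^sub>\<infinity>b\<in>UNIV. ennreal (if b then prb p else 1 - prb p) * ec c f (Active (if b then C else D) \<sigma>))"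
    by (rule infsum_mono_neutral) auto
  also have "\<dots> = ennreal (prb p) * et c C f \<sigma> + ennreal (1 - prb p) * et c D f \<sigma>"
    by (simp add: UNIV_bool add.commute)
  finally show ?case by simp
next
  case (step_while_t \<psi> \<sigma> \<phi> C)
  then show ?case using et_while_unfold[of c \<psi> \<phi> C f \<sigma>] by (simp add: Emd_dirac del: et.simps(6))
next
  case (step_while_f \<psi> \<sigma> \<phi> C)
  then show ?case using et_while_unfold[of c \<psi> \<phi> C f \<sigma>] by (simp add: Emd_dirac del: et.simps(6))
next
  case (step_while_a \<psi> \<sigma> \<phi> C)
  then show ?case by (simp add: Emd_dirac)
next
  case (step_seq C \<sigma> r \<mu> D)
  have "Emd (mmap (kappa D) \<mu>) (ec c f) \<le> Emd \<mu> (\<lambda>a. ec c f (kappa D a))"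
    by (rule Emd_mmap_le)
  also have "\<dots> = Emd \<mu> (ec c (et c D f))" by (simp add: ec_kappa)
  finally have "of_bool c * ennreal r + Emd (mmap (kappa D) \<mu>) (ec c f)
      \<le> of_bool c * ennreal r + Emd \<mu> (ec c (et c D f))" by (rule add_left_mono)
  also have "\<dots> \<le> ec c (et c D f) (Active C \<sigma>)" by (rule step_seq.IH)
  finally show ?case by simp
qed (simp_all add: Emd_dirac)


lemma lstep_sound:
  "lstep \<mu> w \<nu> \<Longrightarrow> good \<mu> \<and> 0 \<le> w \<and> (\<forall>f. of_bool c * ennreal w + Emd \<nu> (ec c f) \<le> Emd \<mu> (ec c f))"
proof (induction rule: lstep.induct)
  case (lstep_refl \<mu>)
  then show ?case by (auto simp: is_mdist_def good_def)
next
  case (lstep_step \<gamma> w \<mu>)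
  have "good (dirac \<gamma>)" by (auto simp: good_def dirac_def split: prod.splits if_splits)
  then show ?case
    using step_nonneg[OF lstep_step] step_sound[OF lstep_step] by (simp add: Emd_dirac)
next
  case (lstep_union I \<mu> ws \<nu> p w)
  have goodi: "\<forall>i\<in>I. good (\<mu> i)" and wsi: "\<forall>i\<in>I. 0 \<le> ws i"
    and IH: "\<And>i f. i \<in> I \<Longrightarrow> of_bool c * ennreal (ws i) + Emd (\<nu> i) (ec c f) \<le> Emd (\<mu> i) (ec c f)"
    using lstep_union.IH by auto
  have pos: "\<forall>i\<in>I. 0 < p i" by fact
  have sum1: "(\<Sum>\<^sub>\<infinity>i\<in>I. ennreal (p i)) \<le> 1" by fact
  have hs: "((\<lambda>i. p i * ws i) has_sum w) I" by fact
  have w0: "0 \<le> w"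
    by (rule has_sum_nonneg[OF hs]) (use pos wsi in auto)
  have main: "of_bool c * ennreal w + Emd (munion I p \<nu>) (ec c f) \<le> Emd (munion I p \<mu>) (ec c f)" for f
  proof -
    let ?e = "of_bool c :: ennreal"
    let ?g = "ec c f"
    have ew: "?e * ennreal w = (\<Sum>\<^sub>\<infinity>i\<in>I. ?e * ennreal (p i * ws i))"
      using ennreal_has_sum[OF hs] pos wsi by (simp add: ennreal_infsum_cmult_right less_imp_le)
    have "?e * ennreal w + Emd (munion I p \<nu>) ?g
        \<le> ?e * ennreal w + (\<Sum>\<^sub>\<infinity>i\<in>I. ennreal (p i) * Emd (\<nu> i) ?g)"
      by (rule add_left_mono, rule Emd_munion_le[OF pos])
    also have "\<dots> = (\<Sum>\<^sub>\<infinity>i\<in>I. ?e * ennreal (p i * ws i) + ennreal (p i) * Emd (\<nu> i) ?g)"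
      unfolding ew by (rule infsum_add[symmetric]) auto
    also have "\<dots> = (\<Sum>\<^sub>\<infinity>i\<in>I. ennreal (p i) * (?e * ennreal (ws i) + Emd (\<nu> i) ?g))"
      using pos wsi by (intro infsum_cong) (simp add: ennreal_mult distrib_left mult_ac less_imp_le)
    also have "\<dots> \<le> (\<Sum>\<^sub>\<infinity>i\<in>I. ennreal (p i) * Emd (\<mu> i) ?g)"
    proof (rule infsum_mono)
      fix i assume "i \<in> I"
      then show "ennreal (p i) * (?e * ennreal (ws i) + Emd (\<nu> i) ?g) \<le> ennreal (p i) * Emd (\<mu> i) ?g"
        by (intro mult_left_mono IH) auto
    qed auto
    also have "\<dots> = Emd (munion I p \<mu>) ?g"
      by (rule Emd_munion_eq[OF pos munion_fin[OF goodi pos sum1], symmetric])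
    finally show ?thesis .
  qed
  show ?case using good_munion[OF goodi pos sum1] w0 main by blast
qed

lemma mstep_sound:
  "mstep \<mu> w \<nu> \<Longrightarrow> 0 \<le> w \<and> (\<forall>f. of_bool c * ennreal w + Emd \<nu> (ec c f) \<le> Emd \<mu> (ec c f))"
proof (induction rule: mstep.induct)
  case (mstep_one \<mu> w \<nu>)
  then show ?case using lstep_sound[OF mstep_one] by blast
next
  case (mstep_trans \<mu> w1 \<mu>' w2 \<nu>)
  have "of_bool c * ennreal (w1 + w2) + Emd \<nu> (ec c f) \<le> Emd \<mu> (ec c f)" for f
  proof -
    have "of_bool c * ennreal (w1 + w2) + Emd \<nu> (ec c f)
        = of_bool c * ennreal w1 + (of_bool c * ennreal w2 + Emd \<nu> (ec c f))"
      using mstep_trans.IH by (simp add: distrib_left add.assoc)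
    also have "\<dots> \<le> of_bool c * ennreal w1 + Emd \<mu>' (ec c f)"
      using mstep_trans.IH by (intro add_left_mono) blast
    also have "\<dots> \<le> Emd \<mu> (ec c f)"
      using mstep_trans.IH by blast
    finally show ?thesis .
  qed
  then show ?case using mstep_trans.IH by simp
qed simp

theorem mainTheorem5:
  fixes \<mu> \<nu> :: "('v::finite) conf mdist" and w :: real and f :: "'v expect" and c :: bool
  assumes "is_mdist \<mu>" and "is_mdist \<nu>" and "0 \<le> w"
    and "mstep \<mu> w \<nu>"
  shows "Emd \<mu> (ec c f) \<ge> of_bool c * ennreal w + Emd \<nu> (ec c f)"
  using mstep_sound[OF assms(4)] by blast

end
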